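(* Let $\theta>1$ be real and $n$ a positive integer. Then either $M'_\theta(n)=\lfloor n/\log\theta-1/2\rfloor$ or $M'_\theta(n)=\lfloor n/\log\theta+1/2\rfloor$. Moreover, $M'_\theta(n)=\lfloor n/\log\theta+1/2\rfloor$ if and only if \[\frac12-f\!\left(\frac{\log\theta}{n}\right)\leq \left\{\frac{n}{\log\theta}\right\}<\frac12.\]
   Context: $\lfloor x\rfloor$ is the floor and $\{x\}=x-\lfloor x\rfloor$ the fractional part; $\log$ is the natural logarithm. $M'_\theta(n)=\left\lfloor 1/(\theta^{1/n}-1)\right\rfloor$. For $t>0$, $f(t)=\frac{1}{e^t-1}-\frac1t+\frac12$. *)

theory Defs
  imports Complex_Main
begin

definition M' :: "real \<Rightarrow> nat \<Rightarrow> int" where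
  "M' \<theta> n = \<lfloor>1 / (\<theta> powr (1 / real n) - 1)\<rfloor>"

definition f :: "real \<Rightarrow> real" where
  "f t = 1 / (exp t - 1) - 1 / t + 1 / 2"

end

theory Submission
  imports Defs
begin

lemma exp_gt_lin: "t \<noteq> 0 \<Longrightarrow> 1 + t < exp (t::real)"
  using exp_minus_greater[of "-t"] by simp

lemma key_ineq:
  fixes t :: real assumes "0 < t" "t < 2"
  shows "(2 - t) * exp t < 2 + t"
proof -
  let ?h = "\<lambda>s::real. (2 + s) - (2 - s) * exp s"
  have "?h 0 < ?h t"
  proof (rule DERIV_pos_imp_increasing_open[OF assms(1)])
    show "continuous_on {0..t} ?h" by (intro continuous_intros)
  next
    fix x :: real assume x: "0 < x" "x < t"
    show "\<exists>y. (?h has_real_derivative y) (at x) \<and> 0 < y"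
    proof (intro exI conjI)
      show "(?h has_real_derivative (1 - (1 - x) * exp x)) (at x)"
        by (auto intro!: derivative_eq_intros simp: algebra_simps)
      show "0 < 1 - (1 - x) * exp x"
      proof -
        have False: "x \<noteq> 0" using x by simp
        show ?thesis
        proof (cases "x < 1")
          case True
          have "1 - x < exp (-x)" using exp_minus_greater False by blast
          hence "(1 - x) * exp x < exp (-x) * exp x" using mult_strict_right_mono by force
          also have "\<dots> = 1" by (simp add: exp_minus field_simps)
          finally show ?thesis by simp
        next
          case False
          hence "(1 - x) * exp x \<le> 0" by (simp add: mult_nonpos_nonneg)
          thus ?thesis by simp
        qed
      qed
    qed
  qed
  thus ?thesis by simp
qed

lemma f_bounds:
  fixes t :: real assumes "0 < t"
  shows "0 < f t" "f t < 1/2"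
proof -
  have e: "exp t - 1 > t" using exp_gt_lin[of t] assms by simp
  hence ep: "exp t - 1 > 0" using assms by simp
  have "1 / (exp t - 1) < 1 / t" using e assms by (simp add: divide_strict_left_mono)
  thus "f t < 1/2" unfolding f_def by simp
  show "0 < f t"
  proof (cases "t < 2")
    case True
    have "(2 - t) * exp t < 2 + t" using key_ineq assms True by blast
    hence "(2 - t) * (exp t - 1) < 2 * t" by (simp add: algebra_simps)
    hence "(2 - t) / (2*t) < 1 / (exp t - 1)" using ep assms
      by (simp add: field_simps)
    moreover have "1/t - 1/2 = (2 - t)/(2*t)" using assms by (simp add: field_simps)
    ultimately show ?thesis unfolding f_def by simp
  next
    case False
    have "1/t \<le> 1/2" using False assms by (simp add: field_simps)
    moreover have "1 / (exp t - 1) > 0" using ep by simp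
    ultimately show ?thesis unfolding f_def by linarith
  qed
qed

theorem mainTheorem9:
  fixes \<theta> :: real and n :: nat
  assumes "\<theta> > 1" and "n \<ge> 1"
  shows "(M' \<theta> n = \<lfloor>real n / ln \<theta> - 1/2\<rfloor> \<or> M' \<theta> n = \<lfloor>real n / ln \<theta> + 1/2\<rfloor>) \<and>
         (M' \<theta> n = \<lfloor>real n / ln \<theta> + 1/2\<rfloor> \<longleftrightarrow>
            (1/2 - f (ln \<theta> / real n) \<le> frac (real n / ln \<theta>) \<and> frac (real n / ln \<theta>) < 1/2))"
proof -
  define t where "t = ln \<theta> / real n"
  define x where "x = real n / ln \<theta>"
  have lp: "ln \<theta> > 0" using assms by simp
  have np: "real n > 0" using assms by simp
  have tp: "t > 0" unfolding t_def using lp np by simp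
  have xt: "x = 1 / t" unfolding x_def t_def by simp
  have pw: "\<theta> powr (1 / real n) = exp t"
    using assms unfolding powr_def t_def by simp
  have y: "1 / (exp t - 1) = x - 1/2 + f t" unfolding f_def xt by simp
  have M: "M' \<theta> n = \<lfloor>x - 1/2 + f t\<rfloor>" unfolding M'_def pw y ..
  have f0: "0 < f t" and f1: "f t < 1/2" using f_bounds tp by auto
  define k where "k = \<lfloor>x\<rfloor>"
  define r where "r = frac x"
  have xr: "x = k + r" unfolding k_def r_def frac_def by simp
  have r0: "0 \<le> r" "r < 1" unfolding r_def by (auto simp: frac_lt_1)
  show ?thesis
    unfolding M x_def[symmetric] t_def[symmetric] r_def[symmetric]
  proof (cases "r < 1/2")
    case True
    have a: "\<lfloor>x - 1/2\<rfloor> = k - 1" unfolding xr using True r0 by linarith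
    have b: "\<lfloor>x + 1/2\<rfloor> = k" unfolding xr using True r0 by linarith
    show "(\<lfloor>x - 1/2 + f t\<rfloor> = \<lfloor>x - 1/2\<rfloor> \<or> \<lfloor>x - 1/2 + f t\<rfloor> = \<lfloor>x + 1/2\<rfloor>) \<and>
      (\<lfloor>x - 1/2 + f t\<rfloor> = \<lfloor>x + 1/2\<rfloor> \<longleftrightarrow> 1/2 - f t \<le> r \<and> r < 1/2)"
      unfolding a b unfolding xr using True r0 f0 f1 by linarith
  next
    case False
    have a: "\<lfloor>x - 1/2\<rfloor> = k" unfolding xr using False r0 by linarith
    have b: "\<lfloor>x + 1/2\<rfloor> = k + 1" unfolding xr using False r0 by linarith
    show "(\<lfloor>x - 1/2 + f t\<rfloor> = \<lfloor>x - 1/2\<rfloor> \<or> \<lfloor>x - 1/2 + f t\<rfloor> = \<lfloor>x + 1/2\<rfloor>) \<and>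
      (\<lfloor>x - 1/2 + f t\<rfloor> = \<lfloor>x + 1/2\<rfloor> \<longleftrightarrow> 1/2 - f t \<le> r \<and> r < 1/2)"
      unfolding a b unfolding xr using False r0 f0 f1 by linarith
  qed
qed

end
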